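(* Let $P_1, \ldots, P_m$ be independent sub-uniform random variables and let $U_1, \ldots, U_m$ be independent uniform random variables on $[0,1]$. For $x \in [0,1]$, let $q = 1- (1-x)^m = \mathrm{P}\{\min_i U_i \leq x\}$. Then \[\mathrm{P}\{\min_i P_i \leq x\} \leq 1-(1-2x)^m = 1-\{2(1-q)^{1/m}-1\}^m,\] and this bound is no larger than $2q$ and tends to $2q - q^2$ as $m \rightarrow \infty$. Furthermore, this bound is achievable when the $P_i$ are independent and identically distributed.
   Context: A random variable $P$ is called sub-uniform if $P \leq_{cx} U$ with $U$ uniform on $[0,1]$, i.e. $\mathrm{E}\{h(P)\} \leq \mathrm{E}\{h(U)\}$ for every convex function $h$ for which the expectations exist. *)

theory Defs
  imports "HOL-Probability.Probability"
begin

definition pos_exp :: "'a measure \<Rightarrow> ('a \<Rightarrow> real) \<Rightarrow> ereal" where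
  "pos_exp M f = enn2ereal (\<integral>\<^sup>+ w. ennreal (f w) \<partial>M)"

definition neg_exp :: "'a measure \<Rightarrow> ('a \<Rightarrow> real) \<Rightarrow> ereal" where
  "neg_exp M f = enn2ereal (\<integral>\<^sup>+ w. ennreal (- f w) \<partial>M)"

definition exp_exists :: "'a measure \<Rightarrow> ('a \<Rightarrow> real) \<Rightarrow> bool" where
  "exp_exists M f \<longleftrightarrow> \<not> (pos_exp M f = \<infinity> \<and> neg_exp M f = \<infinity>)"

definition ext_expectation :: "'a measure \<Rightarrow> ('a \<Rightarrow> real) \<Rightarrow> ereal" where
  "ext_expectation M f = pos_exp M f - neg_exp M f"

abbreviation unif01 :: "real measure" where
  "unif01 \<equiv> uniform_measure lborel {0..1}"

text \<open>P is sub-uniform: P \<le>cx U with U uniform on [0,1], i.e.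
  E h(P) \<le> E h(U) for every convex h for which the expectations exist.
  (E h(U) always exists, as h is continuous hence bounded on [0,1].)\<close>
definition sub_uniform :: "'a measure \<Rightarrow> ('a \<Rightarrow> real) \<Rightarrow> bool" where
  "sub_uniform M P \<longleftrightarrow> P \<in> borel_measurable M \<and>
     (\<forall>h::real \<Rightarrow> real. convex_on UNIV h \<longrightarrow> exp_exists M (\<lambda>w. h (P w)) \<longrightarrow>
        ext_expectation M (\<lambda>w. h (P w)) \<le> ereal (\<integral>u. h u \<partial>unif01))"

end

theory Submission
  imports Defs "HOL-Real_Asymp.Real_Asymp"
begin

lemma unif01_density: "unif01 = density lborel (\<lambda>x. ennreal (indicator {0..1::real} x))"
  unfolding uniform_measure_def by (simp add: ennreal_indicator divide_ennreal_def)

lemma integral_unif01: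
  fixes f :: "real \<Rightarrow> real"
  assumes f: "f \<in> borel_measurable borel"
  shows "integral\<^sup>L unif01 f = (LINT u:{0..1}|lborel. f u)"
  unfolding unif01_density set_lebesgue_integral_def
  by (subst integral_density) (auto simp: f)

lemma integral_unif01_cont:
  fixes f :: "real \<Rightarrow> real"
  assumes f: "f \<in> borel_measurable borel" and c: "continuous_on {0..1} f"
  shows "integral\<^sup>L unif01 f = integral {0..1} f"
  using integral_unif01[OF f] set_borel_integral_eq_integral(2)[OF borel_integrable_atLeastAtMost'[OF c]]
  by simp

lemma integrable_unif01:
  fixes f :: "real \<Rightarrow> real"
  assumes f: "f \<in> borel_measurable borel" and c: "continuous_on {0..1} f"
  shows "integrable unif01 f"
  unfolding unif01_density
  apply (subst integrable_density)
  using borel_integrable_atLeastAtMost'[OF c] f by (auto simp: set_integrable_def)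

lemma int_hinge:
  assumes "0 < x" "x \<le> 1/2"
  shows "integral\<^sup>L unif01 (\<lambda>u. max 0 (2*x - u)) = 2 * x^2"
proof -
  let ?f = "\<lambda>u::real. max 0 (2*x - u)"
  have c: "continuous_on {0..1} ?f" by (intro continuous_intros)
  have "integral\<^sup>L unif01 ?f = integral {0..1} ?f"
    by (rule integral_unif01_cont[OF _ c]) measurable
  also have "\<dots> = integral {0..2*x} ?f + integral {2*x..1} ?f"
    by (rule Henstock_Kurzweil_Integration.integral_combine[symmetric]) (use assms integrable_continuous_real[OF c] in auto)
  also have "integral {2*x..1} ?f = 0"
    by (subst integral_cong[where g="\<lambda>_. 0"]) auto
  also have "integral {0..2*x} ?f = integral {0..2*x} (\<lambda>u. 2*x - u)"
    by (rule integral_cong) auto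
  also have "((\<lambda>u. 2*x - u) has_integral ((2*x*(2*x) - (2*x)^2/2) - (2*x*0 - 0^2/2))) {0..2*x}"
    using assms
    by (intro fundamental_theorem_of_calculus[where f="\<lambda>u. 2*x*u - u^2/2"])
       (auto intro!: derivative_eq_intros simp: has_real_derivative_iff_has_vector_derivative[symmetric])
  then have "integral {0..2*x} (\<lambda>u. 2*x - u) = 2*x^2"
    by (simp add: integral_unique power2_eq_square)
  finally show ?thesis by simp
qed

lemma sub_uniform_le_pos:
  assumes M: "prob_space M" and P: "sub_uniform M P" and x: "0 < x" "x \<le> 1/2"
  shows "measure M {w\<in>space M. P w \<le> x} \<le> 2*x"
proof -
  interpret prob_space M by fact
  define h where "h p = max 0 (2*x - p)" for p
  have conv: "convex_on UNIV h"
    unfolding convex_on_def h_def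
  proof (intro ballI allI impI conjI)
    fix a b u v :: real assume uv: "0 \<le> u" "0 \<le> v" "u + v = 1"
    have "2*x - (u * a + v * b) = (u+v)*(2*x) - (u * a + v * b)" using uv by simp
    also have "\<dots> = u * (2*x - a) + v * (2*x - b)" by (simp add: algebra_simps)
    also have "\<dots> \<le> u * max 0 (2*x - a) + v * max 0 (2*x-b)"
      using uv by (intro add_mono mult_left_mono) auto
    finally show "max 0 (2*x - (u *\<^sub>R a + v *\<^sub>R b)) \<le> u * max 0 (2*x - a) + v * max 0 (2*x-b)"
      using uv by simp
  qed simp
  have Pm[measurable]: "P \<in> borel_measurable M" using P by (simp add: sub_uniform_def)
  have hm[measurable]: "h \<in> borel_measurable borel" unfolding h_def by measurable
  have neg: "neg_exp M (\<lambda>w. h (P w)) = 0"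
    unfolding neg_exp_def h_def by (simp add: ennreal_neg zero_ennreal.rep_eq)
  then have ex: "exp_exists M (\<lambda>w. h (P w))" by (simp add: exp_exists_def)
  have "ext_expectation M (\<lambda>w. h (P w)) \<le> ereal (integral\<^sup>L unif01 h)"
    using P conv ex by (simp add: sub_uniform_def)
  also have "integral\<^sup>L unif01 h = 2*x^2" unfolding h_def using int_hinge[OF x] by simp
  finally have "enn2ereal (\<integral>\<^sup>+ w. ennreal (h (P w)) \<partial>M) \<le> enn2ereal (ennreal (2*x^2))"
    by (simp add: ext_expectation_def neg pos_exp_def)
  then have up: "(\<integral>\<^sup>+ w. ennreal (h (P w)) \<partial>M) \<le> ennreal (2*x^2)"
    by (simp add: less_eq_ennreal.rep_eq)
  define S where "S = {w\<in>space M. P w \<le> x}"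
  have S[measurable]: "S \<in> sets M" unfolding S_def by measurable
  have "ennreal (x * measure M S) = (\<integral>\<^sup>+ w. ennreal x * indicator S w \<partial>M)"
    using x by (simp add: nn_integral_cmult_indicator emeasure_eq_measure ennreal_mult)
  also have "\<dots> \<le> (\<integral>\<^sup>+ w. ennreal (h (P w)) \<partial>M)"
    by (intro nn_integral_mono) (auto simp: S_def h_def split: split_indicator intro!: ennreal_leI)
  also note up
  finally have "x * measure M S \<le> 2*x^2" using x by (simp add: ennreal_le_iff)
  then show ?thesis using x unfolding S_def by (simp add: power2_eq_square)
qed

lemma sub_uniform_le:
  assumes M: "prob_space M" and P: "sub_uniform M P" and x: "0 \<le> x" "x \<le> 1/2"
  shows "measure M {w\<in>space M. P w \<le> x} \<le> 2*x"
proof (cases "x = 0")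
  case False then show ?thesis using sub_uniform_le_pos[OF M P] x by auto
next
  case True
  interpret prob_space M by fact
  have Pm[measurable]: "P \<in> borel_measurable M" using P by (simp add: sub_uniform_def)
  show ?thesis
  proof (rule ccontr)
    let ?c = "measure M {w\<in>space M. P w \<le> 0}"
    assume "\<not> ?thesis"
    then have c: "?c > 0" using True by simp
    define e where "e = min (1/2) (?c/4)"
    have e: "0 < e" "e \<le> 1/2" using c by (auto simp: e_def)
    have "?c \<le> measure M {w\<in>space M. P w \<le> e}"
      using e by (intro finite_measure_mono) auto
    also have "\<dots> \<le> 2*e" by (rule sub_uniform_le_pos[OF M P e])
    finally show False using c unfolding e_def by linarith
  qed
qed

lemma ext_expectation_integrable:
  assumes f: "integrable M f"
  shows "ext_expectation M f = ereal (integral\<^sup>L M f)"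
proof -
  have a: "(\<integral>\<^sup>+x. ennreal (f x) \<partial>M) \<noteq> \<infinity>" and b: "(\<integral>\<^sup>+x. ennreal (- f x) \<partial>M) \<noteq> \<infinity>"
    using f unfolding real_integrable_def by auto
  obtain r where r: "0 \<le> r" "(\<integral>\<^sup>+x. ennreal (f x) \<partial>M) = ennreal r"
    using a by (cases "(\<integral>\<^sup>+x. ennreal (f x) \<partial>M)") auto
  obtain s where s: "0 \<le> s" "(\<integral>\<^sup>+x. ennreal (- f x) \<partial>M) = ennreal s"
    using b by (cases "(\<integral>\<^sup>+x. ennreal (- f x) \<partial>M)") auto
  show ?thesis
    unfolding ext_expectation_def pos_exp_def neg_exp_def real_lebesgue_integral_def[OF f] r s
    using r s by simp
qed

lemma reflect_ineq:
  fixes h :: "real \<Rightarrow> real"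
  assumes conv: "convex_on UNIV h" and x: "0 \<le> x"
  shows "2*x * h x \<le> integral {0..2*x} h"
proof -
  have hc: "continuous_on UNIV h" by (rule convex_on_continuous[OF _ conv]) simp
  then have hc': "continuous_on S h" for S using continuous_on_subset by blast
  have hm[measurable]: "h \<in> borel_measurable borel" by (rule borel_measurable_continuous_onI[OF hc])
  have hr: "continuous_on S (\<lambda>u. h (2*x - u))" for S
    by (intro continuous_on_compose2[OF hc]) (auto intro!: continuous_intros)
  have "integral {0..2*x} h = (LINT u:{0..2*x}|lborel. h u)"
    by (rule set_borel_integral_eq_integral(2)[OF borel_integrable_atLeastAtMost'[OF hc'], symmetric])
  also have "\<dots> = (LINT u|lborel. indicator {0..2*x} u *\<^sub>R h u)" by (simp add: set_lebesgue_integral_def)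
  also have "\<dots> = (LINT u|lborel. indicator {0..2*x} (2*x + (-1)*u) *\<^sub>R h (2*x + (-1)*u))"
    by (subst lborel_integral_real_affine[where c="-1" and t="2*x"]) simp_all
  also have "\<dots> = (LINT u|lborel. indicator {0..2*x} u *\<^sub>R h (2*x - u))"
    by (intro Bochner_Integration.integral_cong) (auto simp: indicator_def)
  also have "\<dots> = (LINT u:{0..2*x}|lborel. h (2*x - u))" by (simp add: set_lebesgue_integral_def)
  also have "\<dots> = integral {0..2*x} (\<lambda>u. h (2*x - u))"
    by (rule set_borel_integral_eq_integral(2)[OF borel_integrable_atLeastAtMost'[OF hr]])
  finally have refl: "integral {0..2*x} h = integral {0..2*x} (\<lambda>u. h (2*x - u))" .
  have "2*x * (2 * h x) = integral {0..2*x} (\<lambda>_. 2 * h x)" using x by simp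
  also have "\<dots> \<le> integral {0..2*x} (\<lambda>u. h u + h (2*x - u))"
  proof (rule integral_le)
    show "(\<lambda>_. 2 * h x) integrable_on {0..2*x}" by (intro integrable_continuous_real continuous_intros)
    show "(\<lambda>u. h u + h (2*x - u)) integrable_on {0..2*x}"
      by (intro integrable_continuous_real continuous_intros hc' hr)
    fix u assume "u \<in> {0..2*x}"
    have "h ((1 - 1/2) *\<^sub>R u + (1/2) *\<^sub>R (2*x - u)) \<le> (1 - 1/2) * h u + (1/2) * h (2*x - u)"
      by (rule convex_onD[OF conv]) auto
    then show "2 * h x \<le> h u + h (2*x - u)" by (simp add: algebra_simps)
  qed
  also have "\<dots> = integral {0..2*x} h + integral {0..2*x} (\<lambda>u. h (2*x - u))"
    by (intro integral_add integrable_continuous_real hc' hr)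
  finally show ?thesis using refl by simp
qed

definition gx :: "real \<Rightarrow> real \<Rightarrow> real" where
  "gx x u = (if u \<le> 2*x then x else u)"

lemma gx_measurable[measurable]: "gx x \<in> borel_measurable borel"
  unfolding gx_def by measurable

lemma prob_space_unif01: "prob_space unif01"
  by (rule prob_space_uniform_measure) auto

lemma gx_integral:
  fixes h :: "real \<Rightarrow> real"
  assumes conv: "convex_on UNIV h" and x: "0 \<le> x" "x \<le> 1/2"
  shows "integrable unif01 (\<lambda>u. h (gx x u))"
    "integral\<^sup>L unif01 (\<lambda>u. h (gx x u)) \<le> integral\<^sup>L unif01 h"
proof -
  interpret U: prob_space unif01 by (rule prob_space_unif01)
  have hc: "continuous_on UNIV h" by (rule convex_on_continuous[OF _ conv]) simp
  then have hc': "continuous_on S h" for S using continuous_on_subset by blast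
  have hm[measurable]: "h \<in> borel_measurable borel" by (rule borel_measurable_continuous_onI[OF hc])
  let ?F = "\<lambda>u. h (gx x u)"
  have "compact (h ` {0..1})" by (intro compact_continuous_image hc') simp
  then obtain B where B: "\<And>y. y \<in> {0..1} \<Longrightarrow> norm (h y) \<le> B"
    by (meson bounded_iff compact_imp_bounded image_eqI)
  have gx01: "u \<in> {0..1} \<Longrightarrow> gx x u \<in> {0..1}" for u using x by (auto simp: gx_def)
  show int: "integrable unif01 ?F"
  proof (rule Bochner_Integration.integrable_bound[where f="\<lambda>_. B"])
    show "integrable unif01 (\<lambda>_. B)" by simp
    show "?F \<in> borel_measurable unif01" by measurable
    show "AE u in unif01. norm (?F u) \<le> norm B"
    proof (rule AE_uniform_measureI)
      have "norm (?F u) \<le> norm B" if "u \<in> {0..1}" for u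
        using B[OF gx01[OF that]] by auto
      then show "AE u in lborel. u \<in> {0..1} \<longrightarrow> norm (?F u) \<le> norm B" by auto
    qed simp
  qed
  have si: "set_integrable lborel {0..1} ?F"
    using int unfolding unif01_density set_integrable_def
    by (subst (asm) integrable_density) auto
  have "integral\<^sup>L unif01 ?F = integral {0..1} ?F"
    using integral_unif01[of ?F] set_borel_integral_eq_integral(2)[OF si] by simp
  also have "\<dots> = integral {0..2*x} ?F + integral {2*x..1} ?F"
    by (rule Henstock_Kurzweil_Integration.integral_combine[symmetric])
       (use x set_borel_integral_eq_integral(1)[OF si] in auto)
  also have "integral {0..2*x} ?F = integral {0..2*x} (\<lambda>_. h x)"
    by (rule integral_cong) (auto simp: gx_def)
  also have "\<dots> = 2*x * h x" using x by simp
  also have "integral {2*x..1} ?F = integral {2*x..1} h"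
    by (rule integral_spike[where S="{2*x}"]) (auto simp: gx_def)
  also have "2*x * h x \<le> integral {0..2*x} h" by (rule reflect_ineq[OF conv x(1)])
  also have "integral {0..2*x} h + integral {2*x..1} h = integral {0..1} h"
    by (rule Henstock_Kurzweil_Integration.integral_combine)
       (use x integrable_continuous_real[OF hc'] in auto)
  also have "\<dots> = integral\<^sup>L unif01 h"
    by (rule integral_unif01_cont[symmetric]) (auto intro: hc')
  finally show "integral\<^sup>L unif01 ?F \<le> integral\<^sup>L unif01 h" by simp
qed

lemma min_indep:
  fixes X :: "nat \<Rightarrow> 'a \<Rightarrow> real" and m :: nat
  assumes M: "prob_space M" and ind: "prob_space.indep_vars M (\<lambda>_. borel) X {..<m}" and m: "m \<ge> 1"
  shows "measure M {w\<in>space M. (MIN i\<in>{..<m}. X i w) \<le> x}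
         = 1 - (\<Prod>i<m. measure M {w\<in>space M. x < X i w})"
proof -
  interpret prob_space M by fact
  have rv[measurable]: "X i \<in> borel_measurable M" if "i < m" for i
    using ind that unfolding indep_vars_def by auto
  have "0 \<in> {..<m}" using m by simp
  then have ne: "{..<m} \<noteq> {}" by blast
  let ?A = "\<Inter>i\<in>{..<m}. X i -` {x<..} \<inter> space M"
  have eq: "{w\<in>space M. (MIN i\<in>{..<m}. X i w) \<le> x} = space M - ?A"
    using ne by (auto simp: Min_le_iff not_less)
  have Aev: "?A \<in> events"
    using ne by (intro sets.finite_INT) (auto intro!: measurable_sets[OF rv])
  have "prob ?A = (\<Prod>i<m. prob (X i -` {x<..} \<inter> space M))"
    by (rule indep_varsD_finite[OF ind ne]) auto
  also have "\<dots> = (\<Prod>i<m. prob {w\<in>space M. x < X i w})"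
    by (intro prod.cong refl arg_cong[where f=prob]) auto
  finally show ?thesis unfolding eq using prob_compl[OF Aev] by simp
qed

lemma unif01_gt:
  assumes "0 \<le> x" "x \<le> 1"
  shows "measure unif01 {x<..} = 1 - x"
proof -
  have "{0..1} \<inter> {x<..} = {x<..1::real}" using assms by auto
  then show ?thesis using assms by (simp add: measure_uniform_measure)
qed

lemma conv_pow:
  fixes b :: real assumes "0 \<le> b" "b \<le> 1"
  shows "2 * ((1 + b)/2)^n \<le> 1 + b^n"
proof (induction n)
  case 0 then show ?case by simp
next
  case (Suc n)
  have p: "0 \<le> (1+b)/2" using assms by simp
  have "2 * ((1 + b)/2)^Suc n = (2 * ((1 + b)/2)^n) * ((1+b)/2)" by simp
  also have "\<dots> \<le> (1 + b^n) * ((1+b)/2)" using Suc p by (intro mult_right_mono) auto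
  also have "\<dots> \<le> 1 + b^Suc n"
  proof -
    have "0 \<le> (1 - b) * (1 - b^n)" using assms by (intro mult_nonneg_nonneg) (auto simp: power_le_one)
    then show ?thesis by (simp add: algebra_simps)
  qed
  finally show ?case .
qed

lemma root_lim:
  fixes q :: real assumes "0 \<le> q" "q < 1"
  shows "((\<lambda>n. 1 - (2 * root n (1 - q) - 1) ^ n) \<longlongrightarrow> 2 * q - q^2) sequentially"
proof (cases "q = 0")
  case True
  have "(\<lambda>n. 1 - (2 * root n (1 - q) - 1) ^ n) = (\<lambda>_. 0)"
  proof
    fix n :: nat show "1 - (2 * root n (1 - q) - 1) ^ n = 0" using True by (cases "n = 0") auto
  qed
  then show ?thesis using True by simp
next
  case False
  define c where "c = 1 - q"
  have c: "0 < c" "c < 1" using assms False by (auto simp: c_def)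
  have "((\<lambda>n::nat. 1 - (2 * c powr (1 / real n) - 1) ^ n) \<longlongrightarrow> 1 - exp (2 * ln c)) sequentially"
    using c by real_asymp
  moreover have "exp (2 * ln c) = c^2" 
  proof -
    have "exp (2 * ln c) = exp (ln c + ln c)" by simp
    also have "\<dots> = exp (ln c) * exp (ln c)" by (rule exp_add)
    finally show ?thesis using c by (simp add: power2_eq_square)
  qed
  moreover have "eventually (\<lambda>n. 1 - (2 * c powr (1 / real n) - 1) ^ n = 1 - (2 * root n c - 1) ^ n) sequentially"
    using eventually_gt_at_top[of 0] by eventually_elim (use c in \<open>simp add: root_powr_inverse\<close>)
  ultimately have "((\<lambda>n. 1 - (2 * root n c - 1) ^ n) \<longlongrightarrow> 1 - c^2) sequentially"
    using Lim_transform_eventually by fastforce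
  moreover have "1 - c^2 = 2 * q - q^2" by (simp add: c_def power2_eq_square algebra_simps)
  ultimately show ?thesis by (simp add: c_def)
qed

lemma exist_part:
  fixes m :: nat and x :: real
  assumes m: "m \<ge> 1" and x: "0 \<le> x" "x \<le> 1/2"
  shows "\<exists>(M' :: (nat \<Rightarrow> real) measure) P'. prob_space M'
              \<and> prob_space.indep_vars M' (\<lambda>_. borel) P' {..<m}
              \<and> (\<forall>i<m. sub_uniform M' (P' i))
              \<and> (\<forall>i<m. distr M' borel (P' i) = distr M' borel (P' 0))
              \<and> measure M' {w \<in> space M'. (MIN i\<in>{..<m}. P' i w) \<le> x} = 1 - (1 - 2 * x) ^ m"
proof -
  define M' where "M' = PiM {..<m} (\<lambda>_. unif01)"
  define P' where "P' i w = gx x (w i)" for i and w :: "nat \<Rightarrow> real"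
  have Mp: "prob_space M'" unfolding M'_def by (intro prob_space_PiM prob_space_unif01)
  interpret prob_space M' by fact
  have projm[measurable]: "(\<lambda>w. w i) \<in> measurable M' unif01" if "i < m" for i
    unfolding M'_def using that by (intro measurable_component_singleton) auto
  have comp: "distr M' unif01 (\<lambda>w. w i) = unif01" if "i < m" for i
    unfolding M'_def using that by (intro distr_PiM_component prob_space_unif01) auto
  have ind0: "indep_vars (\<lambda>_. unif01) (\<lambda>i w. w i) {..<m}"
  proof (subst indep_vars_iff_distr_eq_PiM')
    show "{..<m} \<noteq> {}" using m by (metis lessThan_empty_iff not_one_le_zero)
    show "random_variable unif01 (\<lambda>w. w i)" if "i \<in> {..<m}" for i using projm that by auto
    have "(\<Pi>\<^sub>M i\<in>{..<m}. distr M' unif01 (\<lambda>w. w i)) = M'"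
      unfolding M'_def by (intro PiM_cong) (auto simp: comp[unfolded M'_def])
    moreover have "distr M' (\<Pi>\<^sub>M i\<in>{..<m}. unif01) (\<lambda>x. \<lambda>i\<in>{..<m}. x i) = distr M' M' (\<lambda>x. x)"
      unfolding M'_def by (intro distr_cong) (auto simp: space_PiM PiE_def extensional_restrict)
    moreover have "distr M' M' (\<lambda>x. x) = M'" by (rule distr_id)
    ultimately show "distr M' (\<Pi>\<^sub>M i\<in>{..<m}. unif01) (\<lambda>x. \<lambda>i\<in>{..<m}. x i) =
        (\<Pi>\<^sub>M i\<in>{..<m}. distr M' unif01 (\<lambda>w. w i))" by simp
  qed
  have gm[measurable]: "gx x \<in> measurable unif01 borel" by measurable
  have ind: "indep_vars (\<lambda>_. borel) P' {..<m}"
    unfolding P'_def by (rule indep_vars_compose2[OF ind0]) (use gm in auto)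
  have dist: "distr M' borel (P' i) = distr unif01 borel (gx x)" if "i < m" for i
  proof -
    have "distr M' borel (P' i) = distr (distr M' unif01 (\<lambda>w. w i)) borel (gx x)"
      unfolding P'_def using that by (subst distr_distr) (auto simp: comp_def)
    then show ?thesis using comp[OF that] by simp
  qed
  have sub: "sub_uniform M' (P' i)" if i: "i < m" for i
    unfolding sub_uniform_def
  proof (intro conjI allI impI)
    show Pm: "P' i \<in> borel_measurable M'" unfolding P'_def using i by measurable
    fix h :: "real \<Rightarrow> real" assume conv: "convex_on UNIV h"
    have hc: "continuous_on UNIV h" by (rule convex_on_continuous[OF _ conv]) simp
    have hm[measurable]: "h \<in> borel_measurable borel" by (rule borel_measurable_continuous_onI[OF hc])
    have "integrable (distr M' unif01 (\<lambda>w. w i)) (\<lambda>u. h (gx x u))"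
      using comp[OF i] gx_integral(1)[OF conv x] by simp
    then have int: "integrable M' (\<lambda>w. h (P' i w))"
      unfolding P'_def using i by (subst (asm) integrable_distr_eq) auto
    have "integral\<^sup>L M' (\<lambda>w. h (P' i w)) = integral\<^sup>L (distr M' unif01 (\<lambda>w. w i)) (\<lambda>u. h (gx x u))"
      unfolding P'_def using i by (subst integral_distr) auto
    also have "\<dots> \<le> integral\<^sup>L unif01 h" using comp[OF i] gx_integral(2)[OF conv x] by simp
    finally show "ext_expectation M' (\<lambda>w. h (P' i w)) \<le> ereal (integral\<^sup>L unif01 h)"
      by (simp add: ext_expectation_integrable[OF int])
  qed
  have gt: "measure M' {w\<in>space M'. x < P' i w} = 1 - 2*x" if i: "i < m" for i
  proof -
    have "{w\<in>space M'. x < P' i w} = (\<lambda>w. w i) -` {2*x<..} \<inter> space M'"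
      using x by (auto simp: P'_def gx_def)
    also have "measure M' \<dots> = measure (distr M' unif01 (\<lambda>w. w i)) {2*x<..}"
      using i by (subst measure_distr) auto
    also have "\<dots> = 1 - 2*x" using comp[OF i] unif01_gt[of "2*x"] x by simp
    finally show ?thesis .
  qed
  have "measure M' {w \<in> space M'. (MIN i\<in>{..<m}. P' i w) \<le> x} = 1 - (\<Prod>i<m. measure M' {w\<in>space M'. x < P' i w})"
    by (rule min_indep[OF Mp ind m])
  also have "\<dots> = 1 - (1 - 2*x)^m" using gt by simp
  finally have meas: "measure M' {w \<in> space M'. (MIN i\<in>{..<m}. P' i w) \<le> x} = 1 - (1 - 2 * x) ^ m" .
  have "0 < m" using m by simp
  then show ?thesis using Mp ind sub dist meas by (intro exI[of _ M'] exI[of _ P']) auto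
qed

theorem lemma6:
  fixes M :: "'a measure" and P :: "nat \<Rightarrow> 'a \<Rightarrow> real"
    and N :: "'b measure" and U :: "nat \<Rightarrow> 'b \<Rightarrow> real"
    and m :: nat and x :: real
  assumes M: "prob_space M"
    and P_indep: "prob_space.indep_vars M (\<lambda>_. borel) P {..<m}"
    and P_sub: "\<And>i. i < m \<Longrightarrow> sub_uniform M (P i)"
    and N: "prob_space N"
    and U_indep: "prob_space.indep_vars N (\<lambda>_. borel) U {..<m}"
    and U_unif: "\<And>i. i < m \<Longrightarrow> distr N borel (U i) = unif01"
    and m: "m \<ge> 1"
    and x: "0 \<le> x" "x \<le> 1/2"
  shows "let q = 1 - (1 - x) ^ m; B = 1 - (1 - 2 * x) ^ m in
           measure N {w \<in> space N. (MIN i\<in>{..<m}. U i w) \<le> x} = q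
         \<and> measure M {w \<in> space M. (MIN i\<in>{..<m}. P i w) \<le> x} \<le> B
         \<and> B = 1 - (2 * root m (1 - q) - 1) ^ m
         \<and> B \<le> 2 * q
         \<and> (\<forall>q'. 0 \<le> q' \<and> q' < 1 \<longrightarrow>
              ((\<lambda>n. 1 - (2 * root n (1 - q') - 1) ^ n) \<longlongrightarrow> 2 * q' - q'^2) sequentially)
         \<and> (\<exists>(M' :: (nat \<Rightarrow> real) measure) P'. prob_space M'
              \<and> prob_space.indep_vars M' (\<lambda>_. borel) P' {..<m}
              \<and> (\<forall>i<m. sub_uniform M' (P' i))
              \<and> (\<forall>i<m. distr M' borel (P' i) = distr M' borel (P' 0))
              \<and> measure M' {w \<in> space M'. (MIN i\<in>{..<m}. P' i w) \<le> x} = B)"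
proof -
  have U_gt: "measure N {w\<in>space N. x < U i w} = 1 - x" if i: "i < m" for i
  proof -
    interpret prob_space N by fact
    have [measurable]: "U i \<in> borel_measurable N"
      using U_indep i unfolding indep_vars_def by auto
    have "{w\<in>space N. x < U i w} = U i -` {x<..} \<inter> space N" by auto
    also have "measure N \<dots> = measure (distr N borel (U i)) {x<..}"
      by (subst measure_distr) auto
    also have "\<dots> = 1 - x" using U_unif[OF i] unif01_gt[of x] x by simp
    finally show ?thesis .
  qed
  have A: "measure N {w \<in> space N. (MIN i\<in>{..<m}. U i w) \<le> x} = 1 - (1 - x) ^ m"
    using min_indep[OF N U_indep m, of x] U_gt by simp
  have P_gt: "1 - 2*x \<le> measure M {w\<in>space M. x < P i w}" if i: "i < m" for i
  proof -
    interpret prob_space M by fact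
    have [measurable]: "P i \<in> borel_measurable M"
      using P_indep i unfolding indep_vars_def by auto
    have "space M - {w\<in>space M. P i w \<le> x} = {w\<in>space M. x < P i w}" by auto
    moreover have "measure M (space M - {w\<in>space M. P i w \<le> x}) = 1 - measure M {w\<in>space M. P i w \<le> x}"
      by (rule prob_compl) measurable
    moreover have "measure M {w\<in>space M. P i w \<le> x} \<le> 2*x"
      by (rule sub_uniform_le[OF M P_sub[OF i] x])
    ultimately show ?thesis by simp
  qed
  have "(\<Prod>i<m. 1 - 2*x) \<le> (\<Prod>i<m. measure M {w\<in>space M. x < P i w})"
    by (intro prod_mono) (use x P_gt in auto)
  then have B: "measure M {w \<in> space M. (MIN i\<in>{..<m}. P i w) \<le> x} \<le> 1 - (1 - 2 * x) ^ m"
    using min_indep[OF M P_indep m, of x] by simp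
  have C: "1 - (1 - 2 * x) ^ m = 1 - (2 * root m (1 - (1 - (1 - x) ^ m)) - 1) ^ m"
    using m x by (simp add: real_root_power_cancel)
  have D0: "2 * ((1 + (1 - 2*x))/2)^m \<le> 1 + (1 - 2*x)^m" by (rule conv_pow) (use x in auto)
  have "(1 + (1 - 2*x))/2 = 1 - x" by simp
  then have "2 * (1 - x)^m \<le> 1 + (1 - 2*x)^m" using D0 by metis
  then have D: "1 - (1 - 2 * x) ^ m \<le> 2 * (1 - (1 - x) ^ m)" by (simp add: algebra_simps)
  show ?thesis
    unfolding Let_def using A B C D root_lim exist_part[OF m x] by auto
qed

end
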